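(* Under the hypotheses of the continuity-in-pretrained-model result (Assumption 1, the uniform Lipschitz condition $\|T^Y_0(x_1,y_1)-T^Y_0(x_2,y_2)\|_{\mathcal{Y}_T}\le L(\|x_1-x_2\|_{\mathcal{X}_T}+\|y_1-y_2\|_{\mathcal{Y}_S})$ for all $T^Y_0\in\mathbb{T}^Y_0$, and the bound $|\mathcal{E}^O(h_1)-\mathcal{E}^O(h_2)|\le L'\mathcal{W}_p(h_1\#Law(X_T),h_2\#Law(X_T))^p$ for all intermediate models $h_1,h_2$, for some $L'>0,p\ge1$), the transfer risk $S\mapsto\mathcal{C}(S)$ is continuous on the metric space $(\mathcal{S},d_S)$, where $d_S((\mu_1,f_1),(\mu_2,f_2))=D(\mu_1,\mu_2)+d_M(f_1,f_2)$.
   Context: Transfer learning framework. A source task $S$ consists of an input space $\mathcal{X}_S$ and output space $\mathcal{Y}_S$ (finite-dimensional normed spaces), a random pair $(X_S,Y_S)$, a set $A_S$ of admissible models $f:\mathcal{X}_S\to\mathcal{Y}_S$ and a pretrained model $f_S^*\in A_S$. A target task $T$ has analogous $\mathcal{X}_T,\mathcal{Y}_T,(X_T,Y_T),A_T$ and optimal target model $f_T^*$. Fixed sets $\mathbb{T}^X_0$ of maps $\mathcal{X}_T\to\mathcal{X}_S$ and $\mathbb{T}^Y_0$ of maps $\mathcal{X}_T\times\mathcal{Y}_S\to\mathcal{Y}_T$ are given. For $(T^X_0,T^Y_0)$ the intermediate model is $f_{ST}(x)=T^Y_0(x,f_S^*(T^X_0(x)))$; $\mathbb{P}_T=Law(f_T^*(X_T))$,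 $\mathbb{P}_{ST}=Law(f_{ST}(X_T))$. An output transport risk is $\mathcal{E}^O:A_T\to\mathbb{R}$ with $\mathcal{E}^O\ge0$ and $\mathcal{E}^O(f_{ST})=0$ iff $\mathbb{P}_{ST}=\mathbb{P}_T$. An input transport risk $\mathcal{E}^I$ satisfies $\mathcal{E}^I(T^X_0)\ge0$, with equality iff $T^X_0\#Law(X_T)=Law(X_S)$. The model-specific transfer risk is $\mathcal{C}(S,T\mid f_{ST})=C(\mathcal{E}^O(f_{ST}),\mathcal{E}^I(T^X_0))$, with $C:\mathbb{R}^2\to\mathbb{R}$, $C(0,0)=0$, $C\ge0$ on relevant values, non-decreasing in each argument, and $|C(a,b)-C(a',b')|\le L_C(|a-a'|+|b-b'|)$ for some $L_C>0$. The transfer risk is $\mathcal{C}(S,T)=\inf_{(T^X_0,T^Y_0)\in\mathbb{T}^X_0\times\mathbb{T}^Y_0}\mathcal{C}(S,T\mid f_{ST})$. With target and transport sets fixed, a source task is $S=(\mu,f)\in\mathcal{S}\subset\mathcal{P}(\mathcal{X}_S)\times A_S$ ($\mu=Law(X_S)$, $f=f_S^*$) and $\mathcal{C}(S)=\mathcal{C}(\mu,f):=\mathcal{C}(S,T)$. Assumption 1: $D$ is a metric on $\mathcal{P}(\mathcal{X}_S)$ and $\mathcal{E}^I(T^X_0)=D(T^X_0\#Law(X_T),\mu)$. For a fixed constant $M>0$, $d_M(f_1,f_2):=\min\{M,\sup_{x\in\mathcal{X}_S}\|f_1(x)-f_2(x)\|_{\mathcal{Y}_S}\}$. $\mathcal{W}_p$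 is the $p$-Wasserstein distance on probability measures on $\mathcal{Y}_T$. *)

theory Defs
  imports "HOL-Probability.Probability"
begin

definition prob_measures :: "'a::topological_space measure set" where
  "prob_measures = {\<mu>. prob_space \<mu> \<and> sets \<mu> = sets borel}"

definition metric_on :: "'a set \<Rightarrow> ('a \<Rightarrow> 'a \<Rightarrow> real) \<Rightarrow> bool" where
  "metric_on P D \<longleftrightarrow>
     (\<forall>x\<in>P. \<forall>y\<in>P. 0 \<le> D x y \<and> (D x y = 0 \<longleftrightarrow> x = y) \<and> D x y = D y x) \<and>
     (\<forall>x\<in>P. \<forall>y\<in>P. \<forall>z\<in>P. D x z \<le> D x y + D y z)"

definition couplings :: "'a::topological_space measure \<Rightarrow> 'b::topological_space measure
    \<Rightarrow> ('a \<times> 'b) measure set" where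
  "couplings P Q = {\<pi>. prob_space \<pi> \<and> sets \<pi> = sets borel \<and>
                       distr \<pi> borel fst = P \<and> distr \<pi> borel snd = Q}"

definition wasserstein_pow :: "real \<Rightarrow> 'a::metric_space measure \<Rightarrow> 'a measure \<Rightarrow> ennreal" where
  "wasserstein_pow p P Q =
     (INF \<pi>\<in>couplings P Q. \<integral>\<^sup>+ z. ennreal (dist (fst z) (snd z) powr p) \<partial>\<pi>)"

definition inter_model :: "('xt \<Rightarrow> 'ys \<Rightarrow> 'yt) \<Rightarrow> ('xs \<Rightarrow> 'ys) \<Rightarrow> ('xt \<Rightarrow> 'xs) \<Rightarrow> 'xt \<Rightarrow> 'yt" where
  "inter_model TY f TX = (\<lambda>x. TY x (f (TX x)))"

definition dM :: "real \<Rightarrow> ('a \<Rightarrow> 'b::real_normed_vector) \<Rightarrow> ('a \<Rightarrow> 'b) \<Rightarrow> real" where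
  "dM M f1 f2 = real_of_ereal (min (ereal M) (SUP x. ereal (norm (f1 x - f2 x))))"

text \<open>Transfer risk C(mu,f) under Assumption 1 (E^I(T^X_0) = D(T^X_0 # Law(X_T), mu)).\<close>
definition transfer_risk ::
  "(real \<Rightarrow> real \<Rightarrow> real) \<Rightarrow> (('xt \<Rightarrow> 'yt) \<Rightarrow> real) \<Rightarrow> ('xs::topological_space measure \<Rightarrow> 'xs measure \<Rightarrow> real)
   \<Rightarrow> 'xt::topological_space measure \<Rightarrow> ('xt \<Rightarrow> 'xs) set \<Rightarrow> ('xt \<Rightarrow> 'ys \<Rightarrow> 'yt) set
   \<Rightarrow> 'xs measure \<Rightarrow> ('xs \<Rightarrow> 'ys) \<Rightarrow> real" where
  "transfer_risk C EO D \<nu> TXs TYs \<mu> f =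
     (INF (tx, ty)\<in>TXs \<times> TYs. C (EO (inter_model ty f tx)) (D (distr \<nu> borel tx) \<mu>))"

definition continuous_wrt :: "'a set \<Rightarrow> ('a \<Rightarrow> 'a \<Rightarrow> real) \<Rightarrow> ('a \<Rightarrow> real) \<Rightarrow> bool" where
  "continuous_wrt S d F \<longleftrightarrow>
     (\<forall>s\<in>S. \<forall>e>0. \<exists>\<delta>>0. \<forall>s'\<in>S. d s s' < \<delta> \<longrightarrow> \<bar>F s' - F s\<bar> < e)"

end

theory Submission
  imports Defs
begin

lemma lip_meas:
  fixes ty :: "'a::{real_normed_vector,second_countable_topology} \<Rightarrow> 'b::{real_normed_vector,second_countable_topology} \<Rightarrow> 'c::real_normed_vector"
  assumes lip: "\<forall>x1 x2 y1 y2. norm (ty x1 y1 - ty x2 y2) \<le> L*(norm(x1-x2)+norm(y1-y2))"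
    and k: "k \<in> borel_measurable M" and g: "g \<in> borel_measurable M"
  shows "(\<lambda>x. ty (k x) (g x)) \<in> borel_measurable M"
proof -
  have "(2*\<bar>L\<bar>)-lipschitz_on UNIV (case_prod ty)"
  proof (rule lipschitz_onI)
    fix u v :: "'a \<times> 'b"
    have "dist (case_prod ty u) (case_prod ty v) \<le> L*(norm(fst u - fst v)+norm(snd u - snd v))"
      using lip by (cases u; cases v) (simp add: dist_norm)
    also have "\<dots> \<le> \<bar>L\<bar>*(norm(fst u - fst v)+norm(snd u - snd v))"
      by (intro mult_right_mono) auto
    also have "\<dots> \<le> \<bar>L\<bar>*(dist u v + dist u v)"
      using dist_fst_le[of u v] dist_snd_le[of u v]
      by (intro mult_left_mono) (auto simp: dist_norm)
    finally show "dist (case_prod ty u) (case_prod ty v) \<le> 2*\<bar>L\<bar> * dist u v" by simp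
  qed auto
  then have "continuous_on UNIV (case_prod ty)" by (rule lipschitz_on_continuous_on)
  then have c: "case_prod ty \<in> borel_measurable borel" by (rule borel_measurable_continuous_onI)
  have "(\<lambda>x. (k x, g x)) \<in> borel_measurable M" using k g by (rule borel_measurable_Pair)
  from measurable_compose[OF this c] show ?thesis by simp
qed

lemma W_bound:
  fixes h1 h2 :: "'a::topological_space \<Rightarrow> 'b::{metric_space,second_countable_topology}"
  assumes nu: "prob_space \<nu>" "sets \<nu> = sets borel"
    and m: "h1 \<in> borel_measurable borel" "h2 \<in> borel_measurable borel"
    and b: "\<forall>x. dist (h1 x) (h2 x) \<le> c" and c: "0 \<le> c" and p: "p > 0"
  shows "wasserstein_pow p (distr \<nu> borel h1) (distr \<nu> borel h2) \<le> ennreal (c powr p)"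
proof -
  have m1: "h1 \<in> borel_measurable \<nu>" "h2 \<in> borel_measurable \<nu>"
    using m measurable_cong_sets[OF nu(2) refl] by auto
  define \<phi> where "\<phi> = (\<lambda>x. (h1 x, h2 x))"
  have phi: "\<phi> \<in> borel_measurable \<nu>" unfolding \<phi>_def using m1 by (rule borel_measurable_Pair)
  have fm: "fst \<in> borel_measurable (borel :: ('b\<times>'b) measure)" "snd \<in> borel_measurable (borel :: ('b\<times>'b) measure)"
    by (auto intro!: borel_measurable_continuous_onI continuous_on_fst continuous_on_snd continuous_on_id)
  have phi': "(\<lambda>x. (h1 x, h2 x)) \<in> borel_measurable \<nu>" using phi by (simp add: \<phi>_def)
  have dm: "(\<lambda>z::'b\<times>'b. dist (fst z) (snd z) powr p) \<in> borel_measurable borel"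
      using fm by (intro powr_real_measurable borel_measurable_dist) auto
  define \<pi> where "\<pi> = distr \<nu> borel \<phi>"
  have "\<pi> \<in> couplings (distr \<nu> borel h1) (distr \<nu> borel h2)"
    unfolding couplings_def \<pi>_def
  proof (intro CollectI conjI)
    show "prob_space (distr \<nu> borel \<phi>)" using prob_space.prob_space_distr[OF nu(1) phi] .
    show "sets (distr \<nu> borel \<phi>) = sets borel" by simp
    show "distr (distr \<nu> borel \<phi>) borel fst = distr \<nu> borel h1"
      by (subst distr_distr) (auto simp: phi' fm \<phi>_def comp_def)
    show "distr (distr \<nu> borel \<phi>) borel snd = distr \<nu> borel h2"
      by (subst distr_distr) (auto simp: phi' fm \<phi>_def comp_def)
  qed
  then have "wasserstein_pow p (distr \<nu> borel h1) (distr \<nu> borel h2)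
      \<le> (\<integral>\<^sup>+ z. ennreal (dist (fst z) (snd z) powr p) \<partial>\<pi>)"
    unfolding wasserstein_pow_def by (rule INF_lower)
  also have "\<dots> = (\<integral>\<^sup>+ x. ennreal (dist (h1 x) (h2 x) powr p) \<partial>\<nu>)"
    unfolding \<pi>_def by (subst nn_integral_distr) (auto simp: phi' \<phi>_def dm)
  also have "\<dots> \<le> (\<integral>\<^sup>+ x. ennreal (c powr p) \<partial>\<nu>)"
    using b p by (intro nn_integral_mono ennreal_leI powr_mono2) auto
  also have "\<dots> = ennreal (c powr p)"
    using prob_space.emeasure_space_1[OF nu(1)] by simp
  finally show ?thesis .
qed

lemma INF_close:
  fixes g g' :: "'a \<Rightarrow> real"
  assumes "\<forall>i\<in>I. 0 \<le> g i" "\<forall>i\<in>I. 0 \<le> g' i" "\<forall>i\<in>I. \<bar>g' i - g i\<bar> \<le> B" "0 \<le> B"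
  shows "\<bar>(INF i\<in>I. g' i) - (INF i\<in>I. g i)\<bar> \<le> B"
proof (cases "I = {}")
  case True then show ?thesis using assms by simp
next
  case False
  have b1: "bdd_below (g ` I)" "bdd_below (g' ` I)" using assms by (auto intro!: bdd_belowI2)
  have "(INF i\<in>I. g' i) - B \<le> (INF i\<in>I. g i)"
  proof (rule cINF_greatest[OF False])
    fix i assume i: "i \<in> I"
    have "(INF i\<in>I. g' i) \<le> g' i" by (rule cINF_lower[OF b1(2) i])
    then show "(INF i\<in>I. g' i) - B \<le> g i" using assms(3) i by force
  qed
  moreover have "(INF i\<in>I. g i) - B \<le> (INF i\<in>I. g' i)"
  proof (rule cINF_greatest[OF False])
    fix i assume i: "i \<in> I"
    have "(INF i\<in>I. g i) \<le> g i" by (rule cINF_lower[OF b1(1) i])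
    then show "(INF i\<in>I. g i) - B \<le> g' i" using assms(3) i by force
  qed
  ultimately show ?thesis by linarith
qed

lemma dM_lemma:
  fixes f g :: "'a \<Rightarrow> 'b::real_normed_vector"
  assumes "M > 0" "dM M f g < M"
  shows "0 \<le> dM M f g \<and> (\<forall>x. norm (f x - g x) \<le> dM M f g)"
proof -
  define S where "S = (SUP x. ereal (norm (f x - g x)))"
  have S0: "0 \<le> S" unfolding S_def by (rule order_trans[OF _ SUP_upper[of undefined]]) auto
  have "\<not> ereal M \<le> S"
  proof
    assume "ereal M \<le> S"
    then have "dM M f g = M" unfolding dM_def S_def[symmetric] by (simp add: min_def)
    then show False using assms by simp
  qed
  then have SM: "S < ereal M" by simp
  then have md: "min (ereal M) S = S" by simp
  obtain r where r: "S = ereal r" using S0 SM by (cases S) auto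
  have "dM M f g = r" unfolding dM_def S_def[symmetric] using md r by simp
  moreover have "\<forall>x. ereal (norm (f x - g x)) \<le> S" unfolding S_def by (auto intro: SUP_upper)
  ultimately show ?thesis using r S0 by auto
qed

theorem mainTheorem4:
  fixes \<nu>T :: "'xt::{real_normed_vector, second_countable_topology} measure"
    and fT :: "'xt \<Rightarrow> 'yt::{real_normed_vector, second_countable_topology}"
    and AS :: "('xs::{real_normed_vector, second_countable_topology}
                 \<Rightarrow> 'ys::{real_normed_vector, second_countable_topology}) set"
    and AT :: "('xt \<Rightarrow> 'yt) set"
    and SS :: "('xs measure \<times> ('xs \<Rightarrow> 'ys)) set"
    and TXs :: "('xt \<Rightarrow> 'xs) set"
    and TYs :: "('xt \<Rightarrow> 'ys \<Rightarrow> 'yt) set"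
    and EO :: "('xt \<Rightarrow> 'yt) \<Rightarrow> real"
    and D :: "'xs measure \<Rightarrow> 'xs measure \<Rightarrow> real"
    and C :: "real \<Rightarrow> real \<Rightarrow> real"
    and LC L L' p M :: real
  assumes nuT: "prob_space \<nu>T" "sets \<nu>T = sets borel"
    and fT: "fT \<in> AT" "fT \<in> borel_measurable borel"
    and SS: "SS \<subseteq> prob_measures \<times> AS"
    and AS_meas: "\<forall>f\<in>AS. f \<in> borel_measurable borel"
    and TX_meas: "\<forall>tx\<in>TXs. tx \<in> borel_measurable borel"
    and inter_AT: "\<forall>\<mu> f tx ty. (\<mu>, f) \<in> SS \<longrightarrow> tx \<in> TXs \<longrightarrow> ty \<in> TYs \<longrightarrow> inter_model ty f tx \<in> AT"
    and EO_nonneg: "\<forall>h\<in>AT. 0 \<le> EO h"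
    and EO_zero: "\<forall>\<mu> f tx ty. (\<mu>, f) \<in> SS \<longrightarrow> tx \<in> TXs \<longrightarrow> ty \<in> TYs \<longrightarrow>
          (EO (inter_model ty f tx) = 0 \<longleftrightarrow> distr \<nu>T borel (inter_model ty f tx) = distr \<nu>T borel fT)"
    and D_metric: "metric_on prob_measures D"
    and C00: "C 0 0 = 0"
    and C_nonneg: "\<forall>a b. 0 \<le> a \<longrightarrow> 0 \<le> b \<longrightarrow> 0 \<le> C a b"
    and C_mono1: "\<forall>a a' b. a \<le> a' \<longrightarrow> C a b \<le> C a' b"
    and C_mono2: "\<forall>a b b'. b \<le> b' \<longrightarrow> C a b \<le> C a b'"
    and LC: "LC > 0"
    and C_lip: "\<forall>a b a' b'. \<bar>C a b - C a' b'\<bar> \<le> LC * (\<bar>a - a'\<bar> + \<bar>b - b'\<bar>)"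
    and M: "M > 0"
    and TY_lip: "\<forall>ty\<in>TYs. \<forall>x1 x2 y1 y2.
          norm (ty x1 y1 - ty x2 y2) \<le> L * (norm (x1 - x2) + norm (y1 - y2))"
    and L': "L' > 0"
    and p: "p \<ge> 1"
    and EO_W: "\<forall>\<mu>1 f1 \<mu>2 f2 tx1 tx2 ty1 ty2.
          (\<mu>1, f1) \<in> SS \<longrightarrow> (\<mu>2, f2) \<in> SS \<longrightarrow> tx1 \<in> TXs \<longrightarrow> tx2 \<in> TXs \<longrightarrow>
          ty1 \<in> TYs \<longrightarrow> ty2 \<in> TYs \<longrightarrow>
          ennreal \<bar>EO (inter_model ty1 f1 tx1) - EO (inter_model ty2 f2 tx2)\<bar>
            \<le> ennreal L' * wasserstein_pow p (distr \<nu>T borel (inter_model ty1 f1 tx1))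
                                            (distr \<nu>T borel (inter_model ty2 f2 tx2))"
  shows "continuous_wrt SS (\<lambda>(\<mu>1, f1) (\<mu>2, f2). D \<mu>1 \<mu>2 + dM M f1 f2)
           (\<lambda>(\<mu>, f). transfer_risk C EO D \<nu>T TXs TYs \<mu> f)"
  proof -
  have Dm: "\<And>x y. x \<in> prob_measures \<Longrightarrow> y \<in> prob_measures \<Longrightarrow> 0 \<le> D x y \<and> D x y = D y x"
    and Dt: "\<And>x y z. x \<in> prob_measures \<Longrightarrow> y \<in> prob_measures \<Longrightarrow> z \<in> prob_measures \<Longrightarrow> D x z \<le> D x y + D y z"
  proof -
    have A: "\<forall>x\<in>prob_measures. \<forall>y\<in>prob_measures. 0 \<le> D x y \<and> (D x y = 0 \<longleftrightarrow> x = y) \<and> D x y = D y x"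
      and B: "\<forall>x\<in>prob_measures. \<forall>y\<in>prob_measures. \<forall>z\<in>prob_measures. D x z \<le> D x y + D y z"
      using D_metric unfolding metric_on_def by simp_all
    show "\<And>x y. x \<in> prob_measures \<Longrightarrow> y \<in> prob_measures \<Longrightarrow> 0 \<le> D x y \<and> D x y = D y x"
      using A by simp
    show "\<And>x y z. x \<in> prob_measures \<Longrightarrow> y \<in> prob_measures \<Longrightarrow> z \<in> prob_measures \<Longrightarrow> D x z \<le> D x y + D y z"
      using B by simp
  qed
  have distr_pm: "distr \<nu>T borel tx \<in> prob_measures" if "tx \<in> TXs" for tx
  proof -
    have "tx \<in> borel_measurable \<nu>T" using TX_meas that measurable_cong_sets[OF nuT(2) refl] by auto
    then show ?thesis unfolding prob_measures_def using prob_space.prob_space_distr[OF nuT(1)] by auto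
  qed
  have inter_meas: "inter_model ty f tx \<in> borel_measurable borel"
    if "f \<in> AS" "tx \<in> TXs" "ty \<in> TYs" for f tx ty
  proof -
    have "(\<lambda>x. ty (id x) (f (tx x))) \<in> borel_measurable borel"
    proof (rule lip_meas[where ty=ty and k=id and g="\<lambda>x. f (tx x)" and L=L and M=borel])
      show "\<forall>x1 x2 y1 y2. norm (ty x1 y1 - ty x2 y2) \<le> L * (norm (x1 - x2) + norm (y1 - y2))"
        using TY_lip that(3) by blast
      show "id \<in> borel_measurable borel" by simp
      have "tx \<in> borel_measurable borel" "f \<in> borel_measurable borel" using that AS_meas TX_meas by auto
      then show "(\<lambda>x. f (tx x)) \<in> borel_measurable borel" by (rule measurable_compose)
    qed
    then show ?thesis unfolding inter_model_def by simp
  qed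
  define K where "K = \<bar>L\<bar> + 1"
  have K: "K > 0" "\<bar>L\<bar> \<le> K" unfolding K_def by auto
  show ?thesis unfolding continuous_wrt_def
  proof (intro ballI allI impI)
    fix s e assume s: "s \<in> SS" and e: "(e::real) > 0"
    obtain \<mu> f where sf: "s = (\<mu>, f)" by (cases s)
    define \<delta> where "\<delta> = min M (min (1/K) (e / (2*LC*(L'*K+1))))"
    have LKpos: "L'*K+1 > 0" using L' K by (simp add: add_pos_pos)
    have dpos: "\<delta> > 0" unfolding \<delta>_def using M K e LC LKpos by auto
    have dK: "K*\<delta> \<le> 1"
    proof -
      have "\<delta> \<le> 1/K" unfolding \<delta>_def by simp
      then have "K*\<delta> \<le> K*(1/K)" using K by (intro mult_left_mono) auto
      then show ?thesis using K by simp
    qed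
    have dE: "LC*(L'*K+1)*\<delta> \<le> e/2"
    proof -
      have "\<delta> \<le> e / (2*LC*(L'*K+1))" unfolding \<delta>_def by auto
      then have "LC*(L'*K+1)*\<delta> \<le> LC*(L'*K+1)*(e / (2*LC*(L'*K+1)))"
        using LC LKpos by (intro mult_left_mono) auto
      also have "\<dots> = e/2"
      proof -
        define q where "q = LC*(L'*K+1)"
        have q: "q \<noteq> 0" unfolding q_def using LC LKpos by simp
        have "q * (e / (2*q)) = e/2" using q by (simp add: field_simps)
        then show ?thesis unfolding q_def by (simp add: mult.assoc)
      qed
      finally show ?thesis .
    qed
    show "\<exists>\<delta>>0. \<forall>s'\<in>SS. (case s of (\<mu>1, f1) \<Rightarrow> \<lambda>(\<mu>2, f2). D \<mu>1 \<mu>2 + dM M f1 f2) s' < \<delta> \<longrightarrow>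
       \<bar>(case s' of (\<mu>, f) \<Rightarrow> transfer_risk C EO D \<nu>T TXs TYs \<mu> f) - (case s of (\<mu>, f) \<Rightarrow> transfer_risk C EO D \<nu>T TXs TYs \<mu> f)\<bar> < e"
    proof (intro exI[of _ \<delta>] conjI dpos ballI impI)
      fix s' assume s': "s' \<in> SS"
      obtain \<mu>' f' where sf': "s' = (\<mu>', f')" by (cases s')
      assume "(case s of (\<mu>1, f1) \<Rightarrow> \<lambda>(\<mu>2, f2). D \<mu>1 \<mu>2 + dM M f1 f2) s' < \<delta>"
      then have close: "D \<mu> \<mu>' + dM M f f' < \<delta>" by (simp add: sf sf')
      have inS: "(\<mu>, f) \<in> SS" "(\<mu>', f') \<in> SS" using s s' sf sf' by auto
      then have pm: "\<mu> \<in> prob_measures" "\<mu>' \<in> prob_measures" "f \<in> AS" "f' \<in> AS" using SS by auto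
      have D0: "0 \<le> D \<mu> \<mu>'" using Dm pm by auto
      have dMlt: "dM M f f' < M" using close D0 unfolding \<delta>_def by linarith
      from dM_lemma[OF M dMlt] have dM0: "0 \<le> dM M f f'" and dMb: "\<forall>x. norm (f x - f' x) \<le> dM M f f'" by auto
      have Dlt: "D \<mu> \<mu>' < \<delta>" and dMd: "dM M f f' < \<delta>" using close D0 dM0 by linarith+
      define g where "g = (\<lambda>(tx, ty). C (EO (inter_model ty f tx)) (D (distr \<nu>T borel tx) \<mu>))"
      define g' where "g' = (\<lambda>(tx, ty). C (EO (inter_model ty f' tx)) (D (distr \<nu>T borel tx) \<mu>'))"
      have gen0: "0 \<le> C (EO (inter_model ty ff tx)) (D (distr \<nu>T borel tx) mm)"
        if "(mm, ff) \<in> SS" "mm \<in> prob_measures" "tx \<in> TXs" "ty \<in> TYs" for mm ff tx ty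
      proof -
        have "inter_model ty ff tx \<in> AT" using inter_AT that by blast
        then have a: "0 \<le> EO (inter_model ty ff tx)" using EO_nonneg by blast
        have b: "0 \<le> D (distr \<nu>T borel tx) mm" using Dm[OF distr_pm[OF that(3)] that(2)] by simp
        show ?thesis using C_nonneg a b by blast
      qed
      have g0: "\<forall>i\<in>TXs \<times> TYs. 0 \<le> g i" unfolding g_def
        using gen0[OF inS(1) pm(1)] by auto
      have g'0: "\<forall>i\<in>TXs \<times> TYs. 0 \<le> g' i" unfolding g'_def
        using gen0[OF inS(2) pm(2)] by auto
      have gb: "\<forall>i\<in>TXs \<times> TYs. \<bar>g' i - g i\<bar> \<le> e/2"
      proof
        fix i assume i: "i \<in> TXs \<times> TYs"
        obtain tx ty where itt: "i = (tx, ty)" and tx: "tx \<in> TXs" and ty: "ty \<in> TYs" using i by auto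
        define c where "c = \<bar>L\<bar> * dM M f f'"
        have c0: "0 \<le> c" unfolding c_def using dM0 by simp
        have cK: "c \<le> K*\<delta>" unfolding c_def using K dM0 dMd
          by (meson abs_ge_zero less_imp_le mult_mono)
        have distb: "\<forall>x. dist (inter_model ty f' tx x) (inter_model ty f tx x) \<le> c"
        proof
          fix x
          have "norm (ty x (f' (tx x)) - ty x (f (tx x))) \<le> L * (norm (x - x) + norm (f' (tx x) - f (tx x)))"
            using TY_lip ty by blast
          then have "dist (inter_model ty f' tx x) (inter_model ty f tx x) \<le> L * (norm (x - x) + norm (f' (tx x) - f (tx x)))"
            unfolding inter_model_def dist_norm .
          also have "\<dots> \<le> \<bar>L\<bar> * norm (f' (tx x) - f (tx x))" by (simp add: mult_right_mono)
          also have "\<dots> \<le> c" unfolding c_def using dMb norm_minus_commute[of "f' (tx x)"]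
            by (metis abs_ge_zero mult_left_mono)
          finally show "dist (inter_model ty f' tx x) (inter_model ty f tx x) \<le> c" .
        qed
        have W: "wasserstein_pow p (distr \<nu>T borel (inter_model ty f' tx)) (distr \<nu>T borel (inter_model ty f tx)) \<le> ennreal (c powr p)"
          using p by (intro W_bound nuT inter_meas pm tx ty distb c0) auto
        have "ennreal \<bar>EO (inter_model ty f' tx) - EO (inter_model ty f tx)\<bar> \<le> ennreal L' * ennreal (c powr p)"
        proof -
          have "ennreal \<bar>EO (inter_model ty f' tx) - EO (inter_model ty f tx)\<bar> \<le> ennreal L' * wasserstein_pow p (distr \<nu>T borel (inter_model ty f' tx)) (distr \<nu>T borel (inter_model ty f tx))"
            using EO_W inS tx ty by blast
          also have "\<dots> \<le> ennreal L' * ennreal (c powr p)" using W by (rule mult_left_mono) simp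
          finally show ?thesis .
        qed
        also have "\<dots> = ennreal (L' * c powr p)" using L' by (simp add: ennreal_mult)
        finally have EOb: "\<bar>EO (inter_model ty f' tx) - EO (inter_model ty f tx)\<bar> \<le> L' * c powr p"
          using L' by (simp add: ennreal_le_iff)
        have cp: "c powr p \<le> c"
        proof (cases "c = 0")
          case True then show ?thesis by simp
        next
          case False
          have "c \<le> 1" using cK dK by linarith
          then have "c powr p \<le> c powr 1" using powr_mono'[of 1 p c] p c0 by auto
          then show ?thesis using False c0 by simp
        qed
        have EOb2: "\<bar>EO (inter_model ty f' tx) - EO (inter_model ty f tx)\<bar> \<le> L'*K*\<delta>"
        proof -
          have "c powr p \<le> K*\<delta>" using cp cK by linarith
          then have "L' * c powr p \<le> L' * (K*\<delta>)" using L' by (intro mult_left_mono) auto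
          then show ?thesis using EOb by (simp add: mult.assoc)
        qed
        have Db: "\<bar>D (distr \<nu>T borel tx) \<mu>' - D (distr \<nu>T borel tx) \<mu>\<bar> \<le> \<delta>"
          using Dt[OF distr_pm[OF tx] pm(1) pm(2)] Dt[OF distr_pm[OF tx] pm(2) pm(1)] Dm[OF pm(1) pm(2)] Dlt
          by linarith
        have "\<bar>g' i - g i\<bar> \<le> LC * (\<bar>EO (inter_model ty f' tx) - EO (inter_model ty f tx)\<bar> + \<bar>D (distr \<nu>T borel tx) \<mu>' - D (distr \<nu>T borel tx) \<mu>\<bar>)"
          unfolding g_def g'_def itt using C_lip by simp
        also have "\<dots> \<le> LC * (L'*K*\<delta> + \<delta>)" using EOb2 Db LC by (intro mult_left_mono) auto
        also have "\<dots> = LC*(L'*K+1)*\<delta>" by (simp add: algebra_simps)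
        finally show "\<bar>g' i - g i\<bar> \<le> e/2" using dE by linarith
      qed
      have "\<bar>(INF i\<in>TXs \<times> TYs. g' i) - (INF i\<in>TXs \<times> TYs. g i)\<bar> \<le> e/2"
        using e by (intro INF_close g0 g'0 gb) auto
      then show "\<bar>(case s' of (\<mu>, f) \<Rightarrow> transfer_risk C EO D \<nu>T TXs TYs \<mu> f) - (case s of (\<mu>, f) \<Rightarrow> transfer_risk C EO D \<nu>T TXs TYs \<mu> f)\<bar> < e"
        unfolding sf sf' transfer_risk_def g_def g'_def using e by simp
    qed
  qed
qed

end
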